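(* Let $n$ be odd. Every good drawing of $K_n$ that is $(\lfloor n/2\rfloor-1)$-seq-shellable (for some face) is single-pair-seq-shellable.
   Context: A good drawing of $K_n$ is a drawing on the sphere $S^2$ in which vertices are distinct points and each edge is a simple curve joining its endpoints containing no other vertex, such that any two edges share finitely many points, no two edges meet tangentially, no three edges cross at a common point, any two edges cross at most once, and adjacent edges do not cross. $\mathcal F(D)$ is the set of faces (components of $S^2\setminus D$); $D-S$ is the subdrawing with the vertices in $S$ and incident edges deleted. For a vertex $x$ of a drawing $D'$, the superface $f(x)$ is the unique face of $D'-x$ containing all faces of $D'$ incident to $x$. Simple sequence: in a good drawing $D'$ with face $F$ and vertex $x$ incident to $F$, a sequence $(u_0,\dots,u_k)$ of distinct vertices other than $x$ is a simple sequence of $x$ (w.r.t. $F$) if $u_0$ is incident to $F$ and, for $1\le i\le k$, $u_i$ is incident to the face containing $F$ in $D'-\{u_0,\dots,u_{i-1}\}$. A good drawing $D'$ of $K_r$ is $k$-seq-shellable for a face $F$ if there are distinct vertices $a_0,\dots,a_k$ with $a_0$ incident to $F$ such that (1) for $1\le i\le k$, $a_i$ is incident to the face containing $F$ in $D'-\{a_0,\dots,a_{i-1}\}$, and (2) for $0\le i\le k$, $a_i$ has, in $D'-\{a_0,\dots,a_{i-1}\}$ and w.r.t. the face containing $F$, a simple sequence $(u_0,\dots,u_{k-i})$ with all $u_j\notin\{a_0,\dots,a_i\}$; it is seq-shellable for $F$ if it is $(\lfloor r/2\rfloor-2)$-seq-shellable for $F$. Pair-sequence of $v$ in $D$: a sequence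 $(u_0,\dots,u_{\lfloor n/2\rfloor-2})$ of distinct vertices of $V\setminus\{v\}$ such that (i) $u_0$ is incident to a face of $D$ also incident to $v$, and (ii) for every $j\in\{0,\dots,\lfloor n/2\rfloor-2\}$ with $n-j$ odd, $u_j$ is incident, in $D-\{u_0,\dots,u_{j-1}\}$, to a face also incident to $v$, and, if $j+1\le\lfloor n/2\rfloor-2$, $u_{j+1}$ is incident, in $D-\{u_0,\dots,u_j\}$, to the superface $f(u_j)$ (taken with respect to $D-\{u_0,\dots,u_{j-1}\}$). Single-pair-seq-shellable: a good drawing $D$ of $K_n$ with $n$ odd is single-pair-seq-shellable if some vertex $v$ has a pair-sequence and $D-v$ is seq-shellable for the face $f(v)$. *)

theory Defs
  imports "HOL-Analysis.Analysis"
begin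

text \<open>Drawings of the complete graph on a finite vertex set V on the sphere S2
  (unit sphere of real^3).  p gives the position of a vertex, c u v is a
  parametrisation of the edge uv (only used for u, v in V, u different from v).\<close>

definition S2 :: "(real^3) set" where
  "S2 = sphere 0 1"

type_synonym 'v drawing_pos = "'v \<Rightarrow> real^3"
type_synonym 'v drawing_edges = "'v \<Rightarrow> 'v \<Rightarrow> real \<Rightarrow> real^3"

definition edge :: "'v drawing_edges \<Rightarrow> 'v \<Rightarrow> 'v \<Rightarrow> (real^3) set" where
  "edge c u v = path_image (c u v)"

definition crosses_at :: "(real^3) set \<Rightarrow> (real^3) set \<Rightarrow> real^3 \<Rightarrow> bool" where
  "crosses_at A B x \<longleftrightarrow>
     (\<exists>U h g. openin (top_of_set S2) U \<and> x \<in> U \<and>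
        homeomorphism U (ball (0::complex) 1) h g \<and> h x = 0 \<and>
        h ` (U \<inter> A) = {z \<in> ball 0 1. Im z = 0} \<and>
        h ` (U \<inter> B) = {z \<in> ball 0 1. Re z = 0})"

definition good_drawing :: "'v set \<Rightarrow> 'v drawing_pos \<Rightarrow> 'v drawing_edges \<Rightarrow> bool" where
  "good_drawing V p c \<longleftrightarrow>
     finite V \<and> inj_on p V \<and> p ` V \<subseteq> S2 \<and>
     (\<forall>u\<in>V. \<forall>v\<in>V. u \<noteq> v \<longrightarrow>
        arc (c u v) \<and> pathstart (c u v) = p u \<and> pathfinish (c u v) = p v \<and>
        path_image (c u v) \<subseteq> S2 \<and> edge c u v = edge c v u \<and>
        (\<forall>w\<in>V. w \<noteq> u \<and> w \<noteq> v \<longrightarrow> p w \<notin> edge c u v)) \<and>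
     (\<forall>u\<in>V. \<forall>v\<in>V. \<forall>w\<in>V. \<forall>z\<in>V.
        u \<noteq> v \<and> w \<noteq> z \<and> {u, v} \<noteq> {w, z} \<longrightarrow>
          finite (edge c u v \<inter> edge c w z) \<and>
          (\<forall>x \<in> edge c u v \<inter> edge c w z - p ` V. crosses_at (edge c u v) (edge c w z) x) \<and>
          card (edge c u v \<inter> edge c w z - p ` V) \<le> 1 \<and>
          ({u, v} \<inter> {w, z} \<noteq> {} \<longrightarrow> edge c u v \<inter> edge c w z - p ` V = {})) \<and>
     (\<forall>u1\<in>V. \<forall>v1\<in>V. \<forall>u2\<in>V. \<forall>v2\<in>V. \<forall>u3\<in>V. \<forall>v3\<in>V.
        u1 \<noteq> v1 \<and> u2 \<noteq> v2 \<and> u3 \<noteq> v3 \<and> {u1, v1} \<noteq> {u2, v2} \<and>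
        {u1, v1} \<noteq> {u3, v3} \<and> {u2, v2} \<noteq> {u3, v3} \<longrightarrow>
          edge c u1 v1 \<inter> edge c u2 v2 \<inter> edge c u3 v3 \<subseteq> p ` V)"

text \<open>Point set of the subdrawing induced by the vertex set W (i.e. D - (V - W)).\<close>
definition pts :: "'v drawing_pos \<Rightarrow> 'v drawing_edges \<Rightarrow> 'v set \<Rightarrow> (real^3) set" where
  "pts p c W = p ` W \<union> \<Union>{edge c u v | u v. u \<in> W \<and> v \<in> W \<and> u \<noteq> v}"

definition faces :: "'v drawing_pos \<Rightarrow> 'v drawing_edges \<Rightarrow> 'v set \<Rightarrow> (real^3) set set" where
  "faces p c W = components (S2 - pts p c W)"

definition incident :: "'v drawing_pos \<Rightarrow> 'v \<Rightarrow> (real^3) set \<Rightarrow> bool" where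
  "incident p x F \<longleftrightarrow> p x \<in> closure F"

definition face_cont :: "'v drawing_pos \<Rightarrow> 'v drawing_edges \<Rightarrow> 'v set \<Rightarrow> (real^3) set \<Rightarrow> 'v set \<Rightarrow> (real^3) set" where
  "face_cont p c W F X = (THE G. G \<in> faces p c (W - X) \<and> F \<subseteq> G)"

definition superface :: "'v drawing_pos \<Rightarrow> 'v drawing_edges \<Rightarrow> 'v set \<Rightarrow> 'v \<Rightarrow> (real^3) set" where
  "superface p c W x = (THE G. G \<in> faces p c (W - {x}) \<and>
      (\<forall>F \<in> faces p c W. incident p x F \<longrightarrow> F \<subseteq> G))"

definition simple_seq :: "'v drawing_pos \<Rightarrow> 'v drawing_edges \<Rightarrow> 'v set \<Rightarrow> (real^3) set \<Rightarrow> 'v \<Rightarrow> 'v list \<Rightarrow> bool" where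
  "simple_seq p c W F x us \<longleftrightarrow>
     F \<in> faces p c W \<and> x \<in> W \<and> incident p x F \<and>
     distinct us \<and> set us \<subseteq> W - {x} \<and> us \<noteq> [] \<and>
     incident p (us ! 0) F \<and>
     (\<forall>i. 1 \<le> i \<and> i < length us \<longrightarrow>
        incident p (us ! i) (face_cont p c W F (set (take i us))))"

text \<open>k-seq-shellability (k an integer; for k < 0 the sequence a_0..a_k is empty).\<close>
definition k_seq_shellable :: "'v drawing_pos \<Rightarrow> 'v drawing_edges \<Rightarrow> 'v set \<Rightarrow> (real^3) set \<Rightarrow> int \<Rightarrow> bool" where
  "k_seq_shellable p c W F k \<longleftrightarrow>
     F \<in> faces p c W \<and>
     (\<exists>as. length as = nat (k + 1) \<and> distinct as \<and> set as \<subseteq> W \<and>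
        (as \<noteq> [] \<longrightarrow> incident p (as ! 0) F) \<and>
        (\<forall>i. 1 \<le> i \<and> i < length as \<longrightarrow>
           incident p (as ! i) (face_cont p c W F (set (take i as)))) \<and>
        (\<forall>i < length as. \<exists>us. length us = nat (k - int i + 1) \<and>
           simple_seq p c (W - set (take i as)) (face_cont p c W F (set (take i as))) (as ! i) us \<and>
           set us \<inter> set (take (Suc i) as) = {}))"

definition seq_shellable :: "'v drawing_pos \<Rightarrow> 'v drawing_edges \<Rightarrow> 'v set \<Rightarrow> (real^3) set \<Rightarrow> bool" where
  "seq_shellable p c W F \<longleftrightarrow> k_seq_shellable p c W F (int (card W) div 2 - 2)"

definition pair_sequence :: "'v drawing_pos \<Rightarrow> 'v drawing_edges \<Rightarrow> 'v set \<Rightarrow> 'v \<Rightarrow> 'v list \<Rightarrow> bool" where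
  "pair_sequence p c V v us \<longleftrightarrow>
     (let n = card V in
       length us = nat (int n div 2 - 1) \<and> distinct us \<and> set us \<subseteq> V - {v} \<and>
       (us \<noteq> [] \<longrightarrow> (\<exists>G \<in> faces p c V. incident p (us ! 0) G \<and> incident p v G)) \<and>
       (\<forall>j < length us. odd (n - j) \<longrightarrow>
          (\<exists>G \<in> faces p c (V - set (take j us)). incident p (us ! j) G \<and> incident p v G) \<and>
          (Suc j < length us \<longrightarrow>
             incident p (us ! Suc j) (superface p c (V - set (take j us)) (us ! j)))))"

definition single_pair_seq_shellable :: "'v drawing_pos \<Rightarrow> 'v drawing_edges \<Rightarrow> 'v set \<Rightarrow> bool" where
  "single_pair_seq_shellable p c V \<longleftrightarrow>
     (\<exists>v \<in> V. (\<exists>us. pair_sequence p c V v us) \<and> seq_shellable p c (V - {v}) (superface p c V v))"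

end

theory Submission
  imports Defs
begin

lemma pts_mono: "W' \<subseteq> W \<Longrightarrow> pts p c W' \<subseteq> pts p c W"
  unfolding pts_def by blast

lemma faces_unique:
  assumes "G1 \<in> faces p c Y" "G2 \<in> faces p c Y" "F \<subseteq> G1" "F \<subseteq> G2" "F \<noteq> {}"
  shows "G1 = G2"
  using assms components_nonoverlap unfolding faces_def by blast

lemma face_in_bigger:
  assumes "F \<in> faces p c W"
  shows "\<exists>G. G \<in> faces p c (W - X) \<and> F \<subseteq> G"
proof -
  have ne: "F \<noteq> {}" using assms in_components_nonempty unfolding faces_def by blast
  then obtain y where y: "y \<in> F" by blast
  have sub: "F \<subseteq> S2 - pts p c (W - X)"
    using assms in_components_subset pts_mono[of "W - X" W p c] unfolding faces_def by blast
  have yin: "y \<in> S2 - pts p c (W - X)" using sub y by blast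
  let ?G = "connected_component_set (S2 - pts p c (W - X)) y"
  have "?G \<in> faces p c (W - X)" unfolding faces_def using componentsI[OF yin] .
  moreover have "F \<subseteq> ?G"
    using components_maximal[OF componentsI[OF yin] in_components_connected sub] assms y
      connected_component_refl[OF yin] unfolding faces_def by blast
  ultimately show ?thesis by blast
qed

lemma face_cont_prop:
  assumes "F \<in> faces p c W"
  shows "face_cont p c W F X \<in> faces p c (W - X) \<and> F \<subseteq> face_cont p c W F X"
proof -
  have ne: "F \<noteq> {}" using assms in_components_nonempty unfolding faces_def by blast
  obtain G where G: "G \<in> faces p c (W - X)" "F \<subseteq> G" using face_in_bigger[OF assms] by blast
  have "face_cont p c W F X = G"
    unfolding face_cont_def
    by (rule the_equality) (use G faces_unique ne in blast)+
  thus ?thesis using G by simp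
qed

lemma face_cont_eq:
  assumes "F \<in> faces p c W" "G \<in> faces p c (W - X)" "F \<subseteq> G"
  shows "face_cont p c W F X = G"
proof -
  have ne: "F \<noteq> {}" using assms in_components_nonempty unfolding faces_def by blast
  show ?thesis using face_cont_prop[OF assms(1), of X] faces_unique[OF _ assms(2), of _ F] ne assms(3)
    by blast
qed

lemma gd_finite: "good_drawing V p c \<Longrightarrow> finite V"
  unfolding good_drawing_def by (elim conjE)
lemma gd_inj: "good_drawing V p c \<Longrightarrow> inj_on p V"
  unfolding good_drawing_def by (elim conjE)
lemma gd_S2: "good_drawing V p c \<Longrightarrow> x \<in> V \<Longrightarrow> p x \<in> S2"
  unfolding good_drawing_def by (elim conjE) blast
lemma gd_arc: "good_drawing V p c \<Longrightarrow> u \<in> V \<Longrightarrow> v \<in> V \<Longrightarrow> u \<noteq> v \<Longrightarrow> arc (c u v)"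
  unfolding good_drawing_def by (elim conjE) blast
lemma gd_notin: "good_drawing V p c \<Longrightarrow> u \<in> V \<Longrightarrow> v \<in> V \<Longrightarrow> u \<noteq> v \<Longrightarrow> w \<in> V
   \<Longrightarrow> w \<noteq> u \<Longrightarrow> w \<noteq> v \<Longrightarrow> p w \<notin> edge c u v"
  unfolding good_drawing_def by (elim conjE) blast

lemma closed_pts:
  assumes "good_drawing V p c" "W \<subseteq> V"
  shows "closed (pts p c W)"
proof -
  have fin: "finite W" using gd_finite[OF assms(1)] assms(2) by (rule finite_subset[rotated])
  have eq: "{edge c u v | u v. u \<in> W \<and> v \<in> W \<and> u \<noteq> v} = (\<lambda>(u,v). edge c u v) ` {(u,v). u \<in> W \<and> v \<in> W \<and> u \<noteq> v}"
    by auto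
  have f0: "finite {(u,v). u \<in> W \<and> v \<in> W \<and> u \<noteq> v}"
    by (rule finite_subset[of _ "W \<times> W"]) (auto simp: fin)
  have cl: "closed (edge c u v)" if "u \<in> W" "v \<in> W" "u \<noteq> v" for u v
  proof -
    have "arc (c u v)" using gd_arc[OF assms(1)] that assms(2) by blast
    thus ?thesis unfolding edge_def
      by (simp add: arc_imp_path compact_imp_closed compact_path_image)
  qed
  have "closed (\<Union>((\<lambda>(u,v). edge c u v) ` {(u,v). u \<in> W \<and> v \<in> W \<and> u \<noteq> v}))"
    using f0 cl by (intro closed_Union) auto
  moreover have "closed (p ` W)" using fin by (simp add: finite_imp_closed)
  ultimately show ?thesis unfolding pts_def eq by (intro closed_Un)
qed

lemma superface_prop:
  assumes "good_drawing V p c" "W \<subseteq> V" "x \<in> W" "F0 \<in> faces p c W" "incident p x F0"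
  shows "superface p c W x \<in> faces p c (W - {x}) \<and>
     (\<forall>F \<in> faces p c W. incident p x F \<longrightarrow> F \<subseteq> superface p c W x)"
proof -
  let ?S = "S2 - pts p c (W - {x})"
  have xV: "x \<in> V" using assms by blast
  have pxS2: "p x \<in> S2" using gd_S2[OF assms(1) xV] .
  have pxv: "p x \<notin> p ` (W - {x})"
    using gd_inj[OF assms(1)] assms(2,3) unfolding inj_on_def by blast
  have pxe: "p x \<notin> \<Union>{edge c u v | u v. u \<in> W - {x} \<and> v \<in> W - {x} \<and> u \<noteq> v}"
  proof
    assume "p x \<in> \<Union>{edge c u v | u v. u \<in> W - {x} \<and> v \<in> W - {x} \<and> u \<noteq> v}"
    then obtain u v where "u \<in> V" "v \<in> V" "u \<noteq> x" "v \<noteq> x" "u \<noteq> v" "p x \<in> edge c u v"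
      using assms(2) by blast
    thus False using gd_notin[OF assms(1)] xV by blast
  qed
  have pxS: "p x \<in> ?S" using pxS2 pxv pxe unfolding pts_def by blast
  let ?G = "connected_component_set ?S (p x)"
  have Gc: "?G \<in> components ?S" using componentsI[OF pxS] .
  have openS: "openin (top_of_set S2) ?S"
  proof -
    have "closed (pts p c (W - {x}))" using closed_pts[OF assms(1), of "W - {x}"] assms(2) by blast
    hence "openin (top_of_set S2) (S2 \<inter> (- pts p c (W - {x})))"
      by (intro openin_open_Int) auto
    moreover have "S2 \<inter> (- pts p c (W - {x})) = ?S" by blast
    ultimately show ?thesis by simp
  qed
  have lcS: "locally connected ?S"
    using locally_open_subset[OF locally_connected_sphere[of 0 1] openS[unfolded S2_def]]
    unfolding S2_def .
  have openG: "openin (top_of_set S2) ?G"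
    using openin_trans[OF openin_components_locally_connected[OF lcS Gc] openS] .
  then obtain Op where O: "open Op" "?G = S2 \<inter> Op" by (auto simp: openin_open)
  have pxG: "p x \<in> ?G" using connected_component_refl[OF pxS] by simp
  have key: "F \<subseteq> ?G" if F: "F \<in> faces p c W" "incident p x F" for F
  proof -
    have FS: "F \<subseteq> ?S" using F(1) in_components_subset pts_mono[of "W - {x}" W p c]
      unfolding faces_def by blast
    have "p x \<in> closure F" using F(2) unfolding incident_def .
    moreover have "p x \<in> Op" using pxG O by blast
    ultimately have "F \<inter> Op \<noteq> {}" using O(1) open_Int_closure_eq_empty by blast
    hence "F \<inter> ?G \<noteq> {}" using FS O(2) by blast
    thus ?thesis using components_maximal[OF Gc _ FS] F(1) in_components_connected
      unfolding faces_def by blast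
  qed
  have Gf: "?G \<in> faces p c (W - {x})" unfolding faces_def using Gc .
  have "superface p c W x = ?G"
    unfolding superface_def
  proof (rule the_equality)
    show "?G \<in> faces p c (W - {x}) \<and> (\<forall>F\<in>faces p c W. incident p x F \<longrightarrow> F \<subseteq> ?G)"
      using Gf key by blast
  next
    fix G assume G: "G \<in> faces p c (W - {x}) \<and> (\<forall>F\<in>faces p c W. incident p x F \<longrightarrow> F \<subseteq> G)"
    have "F0 \<noteq> {}" using assms(4) in_components_nonempty unfolding faces_def by blast
    thus "G = ?G" using G Gf faces_unique[of G p c "W - {x}" ?G F0] key assms(4,5) by blast
  qed
  thus ?thesis using Gf key by simp
qed

lemma faces_empty: "faces p c {} = {S2}"
proof -
  have "pts p c {} = {}" unfolding pts_def by auto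
  moreover have "connected S2" unfolding S2_def by (rule connected_sphere) simp
  moreover have "S2 \<noteq> {}" unfolding S2_def by simp
  ultimately show ?thesis unfolding faces_def by (simp add: components_eq_sing_iff)
qed

lemma superface_single: "superface p c {v} v = S2"
  unfolding superface_def
proof (rule the_equality)
  show "S2 \<in> faces p c ({v} - {v}) \<and> (\<forall>F\<in>faces p c {v}. incident p v F \<longrightarrow> F \<subseteq> S2)"
    using faces_empty[of p c] in_components_subset unfolding faces_def by auto
next
  fix G assume "G \<in> faces p c ({v} - {v}) \<and> (\<forall>F\<in>faces p c {v}. incident p v F \<longrightarrow> F \<subseteq> G)"
  thus "G = S2" using faces_empty[of p c] by simp
qed

theorem mainTheorem8:
  fixes V :: "'v set" and p :: "'v drawing_pos" and c :: "'v drawing_edges" and n :: nat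
  assumes "good_drawing V p c"
    and "card V = n"
    and "odd n"
    and "\<exists>F \<in> faces p c V. k_seq_shellable p c V F (int n div 2 - 1)"
  shows "single_pair_seq_shellable p c V"
proof -
  define k where "k = int n div 2 - 1"
  obtain F where hF: "F \<in> faces p c V" and sh: "k_seq_shellable p c V F k"
    using assms(4) k_def by blast
  obtain as where las: "length as = nat (k + 1)" and das: "distinct as" and sas: "set as \<subseteq> V"
    and inc0: "as \<noteq> [] \<longrightarrow> incident p (as ! 0) F"
    and incI: "\<forall>i. 1 \<le> i \<and> i < length as \<longrightarrow>
           incident p (as ! i) (face_cont p c V F (set (take i as)))"
    and seqs: "\<forall>i < length as. \<exists>us. length us = nat (k - int i + 1) \<and>
           simple_seq p c (V - set (take i as)) (face_cont p c V F (set (take i as))) (as ! i) us \<and>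
           set us \<inter> set (take (Suc i) as) = {}"
    using sh unfolding k_seq_shellable_def by blast
  have Fne: "F \<noteq> {}" using hF in_components_nonempty unfolding faces_def by blast
  have fin: "finite V" using gd_finite[OF assms(1)] .
  show ?thesis
  proof (cases "n = 1")
    case True
    then obtain v where V: "V = {v}" using assms(2) card_1_singletonE by blast
    show ?thesis unfolding single_pair_seq_shellable_def
    proof (rule bexI[of _ v])
      have "pair_sequence p c V v []" unfolding pair_sequence_def Let_def using assms(2) True by simp
      moreover have "seq_shellable p c (V - {v}) (superface p c V v)"
        unfolding seq_shellable_def k_seq_shellable_def V superface_single
        using faces_empty[of p c] by simp
      ultimately show "(\<exists>us. pair_sequence p c V v us) \<and> seq_shellable p c (V - {v}) (superface p c V v)"
        by blast
    qed (simp add: V)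
  next
    case False
    hence n3: "n \<ge> 3" using assms(3) by presburger
    define K where "K = length as"
    have K: "K = nat (int n div 2)" using las k_def K_def by simp
    have K1: "K \<ge> 1" using K n3 by simp
    then obtain a0 bs where asd: "as = a0 # bs" using K_def by (cases as) auto
    have a0V: "a0 \<in> V" using sas asd by simp
    have incF: "incident p a0 F" using inc0 asd by simp
    define SF where "SF = superface p c V a0"
    have SF: "SF \<in> faces p c (V - {a0})" "F \<subseteq> SF"
      using superface_prop[OF assms(1) subset_refl a0V hF incF] hF incF unfolding SF_def by blast+
    define Gf where "Gf = (\<lambda>T. face_cont p c V F T)"
    have Gf: "Gf T \<in> faces p c (V - T) \<and> F \<subseteq> Gf T" for T
      unfolding Gf_def using face_cont_prop[OF hF] .
    have Gf0: "Gf {} = F" unfolding Gf_def using face_cont_eq[OF hF, of F "{}"] hF by simp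
    have incl: "incident p x G" if "incident p x H" "H \<subseteq> G" for x G H
      using that closure_mono unfolding incident_def by blast
    obtain us0 where lus0: "length us0 = nat (k + 1)"
      and ss0: "simple_seq p c V F a0 us0"
      using seqs[rule_format, of 0] K1 K_def asd Gf0[unfolded Gf_def] by auto
    have dus0: "distinct us0" and sus0: "set us0 \<subseteq> V - {a0}"
      and i00: "incident p (us0 ! 0) F"
      and iI0: "\<forall>i. 1 \<le> i \<and> i < length us0 \<longrightarrow> incident p (us0 ! i) (Gf (set (take i us0)))"
      using ss0 unfolding simple_seq_def Gf_def by auto
    have incG: "incident p (us0 ! j) (Gf (set (take j us0)))" if "j < length us0" for j
      using that i00 iI0 Gf0 by (cases j) auto
    define us where "us = take (K - 1) us0"
    have lus: "length us = K - 1" using lus0 las K_def us_def by simp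
    have psq: "pair_sequence p c V a0 us"
      unfolding pair_sequence_def Let_def assms(2)
    proof (intro conjI)
      show "length us = nat (int n div 2 - 1)" using lus K by linarith
      show "distinct us" using dus0 us_def by simp
      show "set us \<subseteq> V - {a0}" unfolding us_def using sus0 set_take_subset by (metis order_trans)
      show "us \<noteq> [] \<longrightarrow> (\<exists>G\<in>faces p c V. incident p (us ! 0) G \<and> incident p a0 G)"
        unfolding us_def using hF i00 incF by auto
      show "\<forall>j<length us. odd (n - j) \<longrightarrow>
         (\<exists>G\<in>faces p c (V - set (take j us)). incident p (us ! j) G \<and> incident p a0 G) \<and>
         (Suc j < length us \<longrightarrow>
          incident p (us ! Suc j) (superface p c (V - set (take j us)) (us ! j)))"
      proof (intro allI impI conjI)
        fix j assume j: "j < length us"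
        have tj: "take j us = take j us0" using j us_def by simp
        have jl: "j < length us0" "us ! j = us0 ! j" using j us_def lus0 las K_def by auto
        show "\<exists>G\<in>faces p c (V - set (take j us)). incident p (us ! j) G \<and> incident p a0 G"
        proof (rule bexI)
          show "Gf (set (take j us0)) \<in> faces p c (V - set (take j us))" using Gf[of "set (take j us0)"] tj by simp
          show "incident p (us ! j) (Gf (set (take j us0))) \<and> incident p a0 (Gf (set (take j us0)))"
            using incG[OF jl(1)] incl[OF incF] Gf[of "set (take j us0)"] jl(2) by simp
        qed
        assume sj: "Suc j < length us"
        have sjl: "Suc j < length us0" "us ! Suc j = us0 ! Suc j" using sj us_def lus0 las K_def by auto
        define W where "W = V - set (take j us0)"
        define x where "x = us0 ! j"
        have xn: "us0 ! j \<notin> set (take j us0)" using jl(1) dus0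
          by (auto simp: in_set_conv_nth nth_eq_iff_index_eq)
        have xW: "x \<in> W" unfolding W_def x_def using xn nth_mem[OF jl(1)] sus0 by blast
        have SP: "superface p c W x \<in> faces p c (W - {x})"
          "Gf (set (take j us0)) \<subseteq> superface p c W x"
          using superface_prop[OF assms(1) _ xW, of "Gf (set (take j us0))"] Gf[of "set (take j us0)"]
            incG[OF jl(1)] unfolding W_def x_def by auto
        have eqW: "W - {x} = V - set (take (Suc j) us0)"
          unfolding W_def x_def using jl(1) by (auto simp: take_Suc_conv_app_nth)
        have "Gf (set (take (Suc j) us0)) = superface p c W x"
          using faces_unique[of "Gf (set (take (Suc j) us0))" p c "W - {x}" "superface p c W x" F]
            Gf[of "set (take (Suc j) us0)"] Gf[of "set (take j us0)"] SP eqW Fne by auto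
        thus "incident p (us ! Suc j) (superface p c (V - set (take j us)) (us ! j))"
          using incG[OF sjl(1)] sjl(2) tj jl(2) unfolding W_def x_def by simp
      qed
    qed
    have key: "face_cont p c (V - {a0}) SF (set (take i bs)) = Gf (set (take (Suc i) as))" for i
    proof -
      have e: "V - {a0} - set (take i bs) = V - set (take (Suc i) as)" using asd by auto
      have L: "face_cont p c (V - {a0}) SF (set (take i bs)) \<in> faces p c (V - set (take (Suc i) as))"
        "SF \<subseteq> face_cont p c (V - {a0}) SF (set (take i bs))"
        using face_cont_prop[OF SF(1), of "set (take i bs)"] e by auto
      show ?thesis using faces_unique[OF L(1) conjunct1[OF Gf], of F] L(2) SF(2) Gf Fne by blast
    qed
    have SF0: "face_cont p c (V - {a0}) SF {} = SF" using face_cont_eq[OF SF(1) _ subset_refl] SF(1)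
      by simp
    have cardV: "card (V - {a0}) = n - 1" using assms(2) a0V fin by simp
    obtain m where m: "n = 2 * m + 1" using assms(3) oddE by blast
    have kk: "k = int m - 1" using m k_def by simp
    have cc: "card (V - {a0}) = 2 * m" using cardV m by simp
    have "seq_shellable p c (V - {a0}) SF"
      unfolding seq_shellable_def k_seq_shellable_def
    proof (intro conjI exI[of _ bs])
      show "SF \<in> faces p c (V - {a0})" using SF(1) .
      show "length bs = nat (int (card (V - {a0})) div 2 - 2 + 1)"
        using las asd kk cc by simp
      show "distinct bs" using das asd by simp
      show "set bs \<subseteq> V - {a0}" using das asd sas by auto
      show "bs \<noteq> [] \<longrightarrow> incident p (bs ! 0) SF"
      proof
        assume "bs \<noteq> []"
        hence "1 < length as" using asd by simp
        hence "incident p (as ! 1) (Gf (set (take 1 as)))" using incI unfolding Gf_def by blast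
        thus "incident p (bs ! 0) SF" using key[of 0] SF0 asd by simp
      qed
      show "\<forall>i. 1 \<le> i \<and> i < length bs \<longrightarrow>
        incident p (bs ! i) (face_cont p c (V - {a0}) SF (set (take i bs)))"
      proof (intro allI impI)
        fix i assume i: "1 \<le> i \<and> i < length bs"
        hence "1 \<le> Suc i \<and> Suc i < length as" using asd by simp
        hence "incident p (as ! Suc i) (Gf (set (take (Suc i) as)))" using incI unfolding Gf_def by blast
        thus "incident p (bs ! i) (face_cont p c (V - {a0}) SF (set (take i bs)))"
          using key[of i] asd by simp
      qed
      show "\<forall>i<length bs. \<exists>us. length us = nat (int (card (V - {a0})) div 2 - 2 - int i + 1) \<and>
          simple_seq p c (V - {a0} - set (take i bs)) (face_cont p c (V - {a0}) SF (set (take i bs))) (bs ! i) us \<and>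
          set us \<inter> set (take (Suc i) bs) = {}"
      proof (intro allI impI)
        fix i assume i: "i < length bs"
        obtain vs where vs: "length vs = nat (k - int (Suc i) + 1)"
          "simple_seq p c (V - set (take (Suc i) as)) (Gf (set (take (Suc i) as))) (as ! Suc i) vs"
          "set vs \<inter> set (take (Suc (Suc i)) as) = {}"
        proof -
          have "Suc i < length as" using i asd by simp
          from seqs[rule_format, OF this] show ?thesis using that unfolding Gf_def by blast
        qed
        have e: "V - {a0} - set (take i bs) = V - set (take (Suc i) as)" using asd by auto
        have ln: "nat (int (card (V - {a0})) div 2 - 2 - int i + 1) = nat (k - int (Suc i) + 1)"
          using kk cc by simp
        show "\<exists>us. length us = nat (int (card (V - {a0})) div 2 - 2 - int i + 1) \<and>
          simple_seq p c (V - {a0} - set (take i bs)) (face_cont p c (V - {a0}) SF (set (take i bs))) (bs ! i) us \<and>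
          set us \<inter> set (take (Suc i) bs) = {}"
        proof (intro exI[of _ vs] conjI)
          show "length vs = nat (int (card (V - {a0})) div 2 - 2 - int i + 1)" using vs(1) ln by simp
          show "simple_seq p c (V - {a0} - set (take i bs)) (face_cont p c (V - {a0}) SF (set (take i bs))) (bs ! i) vs"
            using vs(2) e key[of i] asd by simp
          have "set (take (Suc i) bs) \<subseteq> set (take (Suc (Suc i)) as)" using asd by auto
          thus "set vs \<inter> set (take (Suc i) bs) = {}" using vs(3) by blast
        qed
      qed
    qed
    thus ?thesis unfolding single_pair_seq_shellable_def SF_def using psq a0V by blast
  qed
qed

end
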